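(* Let $k\subset K$ be a finite totally ramified extension of complete discrete valuation fields of degree $n$. On $\mathbb Z^2$ define $(a,b)\le(a',b')$ iff $a\le a'$ and $b\le b'$, and $(a,b)\sim(a',b')$ iff $a-a'=b'-b=nc$ for some $c\in\mathbb Z$. Then: 1. $\le$ is a partial order and $\sim$ is an equivalence relation on $\mathbb Z^2$. 2. On $\mathcal X=\mathbb Z^2/\sim$ (with $[(a,b)]$ the class of $(a,b)$), setting $[(a,b)]\le^{\mathcal X}[(a',b')]$ iff $(a,b)\le(a'',b'')$ for some $(a'',b'')\sim(a',b')$ gives a well-defined partial order. 3. For all $a,b,a',b'\in\mathbb Z$: $\mathfrak m^a\otimes\mathfrak m^b\supseteq\mathfrak m^{a'}\otimes\mathfrak m^{b'}$ if and only if $[(a,b)]\le^{\mathcal X}[(a',b')]$.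
   Context: $\mathfrak m$ is the maximal ideal of the ring of integers $O_K$ of $K$, $O_k$ the ring of integers of $k$. For $O_k$-submodules $A,B\subset K$, $A\otimes B$ denotes the $O_k$-submodule of $K\otimes_kK$ generated by all $x\otimes y$ with $x\in A$, $y\in B$. *)

theory Defs
  imports Main
begin

text \<open>A normalized discrete valuation on a field of type 'K is given by its
restriction v to the nonzero elements (the value of v at 0 is irrelevant).\<close>

definition discrete_valuation :: "('K::field \<Rightarrow> int) \<Rightarrow> bool" where
  "discrete_valuation v \<longleftrightarrow>
     (\<forall>x y. x \<noteq> 0 \<longrightarrow> y \<noteq> 0 \<longrightarrow> v (x * y) = v x + v y) \<and>
     (\<forall>x y. x \<noteq> 0 \<longrightarrow> y \<noteq> 0 \<longrightarrow> x + y \<noteq> 0 \<longrightarrow> v (x + y) \<ge> min (v x) (v y)) \<and>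
     (\<forall>z. \<exists>x. x \<noteq> 0 \<and> v x = z)"

definition vcauchy :: "('K::field \<Rightarrow> int) \<Rightarrow> 'K set \<Rightarrow> (nat \<Rightarrow> 'K) \<Rightarrow> bool" where
  "vcauchy v S s \<longleftrightarrow> (\<forall>i. s i \<in> S) \<and>
     (\<forall>N::int. \<exists>M. \<forall>i\<ge>M. \<forall>j\<ge>M. s i = s j \<or> v (s i - s j) \<ge> N)"

definition vconverges :: "('K::field \<Rightarrow> int) \<Rightarrow> (nat \<Rightarrow> 'K) \<Rightarrow> 'K \<Rightarrow> bool" where
  "vconverges v s L \<longleftrightarrow> (\<forall>N::int. \<exists>M. \<forall>i\<ge>M. s i = L \<or> v (s i - L) \<ge> N)"

definition vcomplete_on :: "('K::field \<Rightarrow> int) \<Rightarrow> 'K set \<Rightarrow> bool" where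
  "vcomplete_on v S \<longleftrightarrow> (\<forall>s. vcauchy v S s \<longrightarrow> (\<exists>L\<in>S. vconverges v s L))"

definition subfield :: "'K::field set \<Rightarrow> bool" where
  "subfield k \<longleftrightarrow> 0 \<in> k \<and> 1 \<in> k \<and> (\<forall>x\<in>k. \<forall>y\<in>k. x + y \<in> k \<and> x * y \<in> k) \<and>
     (\<forall>x\<in>k. - x \<in> k \<and> inverse x \<in> k)"

definition ext_degree :: "'K::field set \<Rightarrow> nat \<Rightarrow> bool" where
  "ext_degree k n \<longleftrightarrow> (\<exists>bs::'K list. length bs = n \<and>
     (\<forall>x. \<exists>!cs. length cs = n \<and> set cs \<subseteq> k \<and> x = (\<Sum>i<n. cs ! i * bs ! i)))"

text \<open>Powers of the maximal ideal of O_K (fractional ideals for a < 0), and O_k.\<close>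
definition mpow :: "('K::field \<Rightarrow> int) \<Rightarrow> int \<Rightarrow> 'K set" where
  "mpow v a = {x. x = 0 \<or> v x \<ge> a}"

definition ring_of_integers :: "('K::field \<Rightarrow> int) \<Rightarrow> 'K set \<Rightarrow> 'K set" where
  "ring_of_integers v k = {x \<in> k. x = 0 \<or> v x \<ge> 0}"

text \<open>Elements of the free k-vector space on K \<times> K are represented by finitely
supported functions; K \<otimes>_k K is its quotient by the k-span of the bilinearity
relations. An O_k-submodule of K \<otimes>_k K is represented by its full preimage in the
free space, so inclusion of submodules is inclusion of preimages.\<close>

definition delta :: "'K \<times> 'K \<Rightarrow> 'K \<times> 'K \<Rightarrow> 'K::field" where
  "delta p = (\<lambda>q. if q = p then 1 else 0)"

definition lin_comb :: "('K \<times> 'K \<Rightarrow> 'K::field) set \<Rightarrow> 'K set \<Rightarrow> ('K \<times> 'K \<Rightarrow> 'K) set" where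
  "lin_comb S C = {(\<lambda>q. \<Sum>g\<in>G. c g * g q) | G c. finite G \<and> G \<subseteq> S \<and> (\<forall>g\<in>G. c g \<in> C)}"

definition bilin_rels :: "'K::field set \<Rightarrow> ('K \<times> 'K \<Rightarrow> 'K) set" where
  "bilin_rels k =
     {(\<lambda>q. delta (x + x', y) q - delta (x, y) q - delta (x', y) q) | x x' y. True} \<union>
     {(\<lambda>q. delta (x, y + y') q - delta (x, y) q - delta (x, y') q) | x y y'. True} \<union>
     {(\<lambda>q. delta (c * x, y) q - c * delta (x, y) q) | c x y. c \<in> k} \<union>
     {(\<lambda>q. delta (x, c * y) q - c * delta (x, y) q) | c x y. c \<in> k}"

text \<open>Preimage in the free space of the O_k-submodule A \<otimes> B of K \<otimes>_k K generated by
all x \<otimes> y with x \<in> A, y \<in> B.\<close>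
definition tensor_sub :: "('K::field \<Rightarrow> int) \<Rightarrow> 'K set \<Rightarrow> 'K set \<Rightarrow> 'K set \<Rightarrow> ('K \<times> 'K \<Rightarrow> 'K) set" where
  "tensor_sub v k A B =
     {(\<lambda>q. f q + r q) | f r.
        f \<in> lin_comb {delta (x, y) | x y. x \<in> A \<and> y \<in> B} (ring_of_integers v k) \<and>
        r \<in> lin_comb (bilin_rels k) k}"

definition le2 :: "(int \<times> int) rel" where
  "le2 = {(p, q). fst p \<le> fst q \<and> snd p \<le> snd q}"

definition sim :: "nat \<Rightarrow> (int \<times> int) rel" where
  "sim n = {(p, q). \<exists>c::int. fst p - fst q = int n * c \<and> snd q - snd p = int n * c}"

definition leX_rep :: "nat \<Rightarrow> int \<times> int \<Rightarrow> int \<times> int \<Rightarrow> bool" where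
  "leX_rep n p q \<longleftrightarrow> (\<exists>q''. (q'', q) \<in> sim n \<and> (p, q'') \<in> le2)"

definition leX :: "nat \<Rightarrow> ((int \<times> int) set) rel" where
  "leX n = {(X, Y). X \<in> UNIV // sim n \<and> Y \<in> UNIV // sim n \<and> (\<exists>p\<in>X. \<exists>q\<in>Y. leX_rep n p q)}"

end

theory Submission
  imports Defs "HOL-Algebra.Embedded_Algebras"
begin

definition RK :: "'K::field ring" where
  "RK = \<lparr>carrier = UNIV, monoid.mult = (*), one = 1, zero = 0, add = (+)\<rparr>"

lemma RK_simps [simp]: "carrier RK = UNIV" "x \<otimes>\<^bsub>RK\<^esub> y = x * y" "x \<oplus>\<^bsub>RK\<^esub> y = x + y"
  "\<zero>\<^bsub>RK\<^esub> = 0" "\<one>\<^bsub>RK\<^esub> = 1"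
  by (simp_all add: RK_def)

lemma field_RK: "field (RK :: 'K::field ring)"
proof -
  have "\<exists>y. x + y = 0" for x :: 'K
    using add.right_inverse by blast
  moreover have "x \<noteq> 0 \<Longrightarrow> \<exists>y. x * y = 1" for x :: 'K
    by (rule exI[of _ "inverse x"]) auto
  ultimately show ?thesis
    unfolding RK_def using add.right_inverse
    by unfold_locales (auto simp:algebra_simps Units_def)
qed

lemma ring_RK: "ring (RK :: 'K::field ring)"
  using field_RK by (meson field_def domain_def cring_def)

lemma RK_minus [simp]: "\<ominus>\<^bsub>RK\<^esub> x = - (x::'K::field)"
proof -
  have "x + \<ominus>\<^bsub>RK\<^esub> x = 0" using abelian_group.r_neg[OF ring.is_abelian_group[OF ring_RK], of x] by simp
  thus ?thesis using add.inverse_unique by metis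
qed

lemma RK_inv [simp]: "(x::'K::field) \<noteq> 0 \<Longrightarrow> inv\<^bsub>RK\<^esub> x = inverse x"
proof -
  assume x: "x \<noteq> 0"
  interpret F: field "RK::'K ring" by (rule field_RK)
  have "x \<in> Units RK" by (simp add: F.field_Units x)
  hence "x \<otimes>\<^bsub>RK\<^esub> inv\<^bsub>RK\<^esub> x = \<one>\<^bsub>RK\<^esub>" by (rule F.Units_r_inv)
  hence "x * inv\<^bsub>RK\<^esub> x = 1" by simp
  thus ?thesis using inverse_unique by metis
qed

lemma subfield_RK:
  assumes "Defs.subfield k"
  shows "Subrings.subfield k (RK :: 'K::field ring)"
proof (rule field.subfieldI'[OF field_RK])
  show "subring k RK"
    using assms unfolding Defs.subfield_def
    by (intro ring.subringI[OF ring_RK]) auto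
  show "\<And>x. x \<in> k - {\<zero>\<^bsub>RK\<^esub>} \<Longrightarrow> inv\<^bsub>RK\<^esub> x \<in> k"
    using assms unfolding Defs.subfield_def by auto
qed


lemma combine_sum:
  "length Ks = length Us \<Longrightarrow> ring.combine (RK::'K::field ring) Ks Us = (\<Sum>i<length Us. Ks!i * Us!i)"
proof (induct Us arbitrary: Ks)
  case Nil thus ?case by (simp add: ring.combine.simps[OF ring_RK])
next
  case (Cons u Us)
  then obtain c Cs where Ks: "Ks = c # Cs" by (metis length_Suc_conv)
  with Cons show ?case by (simp add: ring.combine.simps[OF ring_RK] sum.lessThan_Suc_shift del: sum.lessThan_Suc)
qed

lemma my_indep_imp:
  assumes k: "Defs.subfield k"
    and ind: "\<And>cs. length cs = length Us \<Longrightarrow> set cs \<subseteq> k \<Longrightarrow> (\<Sum>i<length Us. cs!i * Us!i) = 0 \<Longrightarrow> set cs \<subseteq> {0}"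
  shows "ring.independent (RK::'K::field ring) k Us"
proof (rule ring.trivial_combine_imp_independent[OF ring_RK subfield_RK[OF k]])
  show "set Us \<subseteq> carrier RK" by simp
  fix Ks assume Ks: "set Ks \<subseteq> k" "ring.combine RK Ks Us = \<zero>\<^bsub>RK\<^esub>"
  obtain Ks' where Ks': "set (take (length Us) Ks) \<subseteq> set Ks'"
     "set Ks' \<subseteq> set (take (length Us) Ks) \<union> {\<zero>\<^bsub>RK\<^esub>}"
     "length Ks' = length Us" "ring.combine RK Ks' Us = \<zero>\<^bsub>RK\<^esub>"
    using ring.combine_normalize[OF ring_RK _ _ Ks(2)] by auto
  have "set (take (length Us) Ks) \<subseteq> k" using Ks(1) by (meson order_trans set_take_subset)
  moreover have "0 \<in> k" using k unfolding Defs.subfield_def by simp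
  ultimately have "set Ks' \<subseteq> k" using Ks'(2) by auto
  hence "set Ks' \<subseteq> {0}" using ind[OF Ks'(3)] Ks'(4) combine_sum[OF Ks'(3)] by simp
  thus "set (take (length Us) Ks) \<subseteq> {\<zero>\<^bsub>RK\<^esub>}" using Ks'(1) by simp
qed

lemma spanning:
  assumes k: "Defs.subfield k" and deg: "ext_degree k n" and len: "length es = n"
    and ind: "\<And>cs. length cs = n \<Longrightarrow> set cs \<subseteq> k \<Longrightarrow> (\<Sum>i<n. cs!i * es!i) = 0 \<Longrightarrow> set cs \<subseteq> {0}"
  shows "\<exists>cs. length cs = n \<and> set cs \<subseteq> k \<and> (x::'K::field) = (\<Sum>i<n. cs!i * es!i)"
proof -
  note R = ring_RK[where 'K='K] and K = subfield_RK[OF k]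
  obtain bs :: "'K list" where bs: "length bs = n"
    "\<And>x. \<exists>!cs. length cs = n \<and> set cs \<subseteq> k \<and> x = (\<Sum>i<n. cs ! i * bs ! i)"
    using deg unfolding ext_degree_def by blast
  have zk: "0 \<in> k" using k unfolding Defs.subfield_def by simp
  have bind: "ring.independent (RK::'K ring) k bs"
  proof (rule my_indep_imp[OF k])
    fix cs assume cs: "length cs = length bs" "set cs \<subseteq> k" "(\<Sum>i<length bs. cs!i * bs!i) = 0"
    have z: "length (replicate n (0::'K)) = n \<and> set (replicate n (0::'K)) \<subseteq> k \<and> (0::'K) = (\<Sum>i<n. replicate n 0 ! i * bs ! i)"
      using zk by auto
    have "cs = replicate n 0" using bs(2)[of 0] z cs bs(1) by metis
    thus "set cs \<subseteq> {0}" by (simp add: set_replicate_conv_if)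
  qed
  have bspan: "ring.Span (RK::'K ring) k bs = UNIV"
  proof -
    have "y \<in> ring.Span (RK::'K ring) k bs" for y
    proof -
      obtain cs where cs: "length cs = n" "set cs \<subseteq> k" "y = (\<Sum>i<n. cs ! i * bs ! i)" using bs(2)[of y] by blast
      show ?thesis using ring.Span_mem_iff_length_version[OF R K, of bs y] cs combine_sum[of cs bs] bs(1) by auto
    qed
    thus ?thesis by auto
  qed
  have dim: "ring.dimension (RK::'K ring) n k UNIV"
    using ring.dimensionI[OF R K bind bspan] bs(1) by simp
  have eind: "ring.independent (RK::'K ring) k es"
    using my_indep_imp[OF k, of es] ind len by auto
  have espan: "ring.Span (RK::'K ring) k es = UNIV"
    using ring.independent_length_eq_dimension[OF R K dim eind] len by simp
  obtain Ks where Ks: "set Ks \<subseteq> k" "length Ks = length es" "x = ring.combine RK Ks es"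
    using ring.Span_mem_iff_length_version[OF R K, of es x] espan by auto
  thus ?thesis using combine_sum[of Ks es] len by auto
qed


section \<open>Valuation basics\<close>

lemma dv_mult: "discrete_valuation v \<Longrightarrow> x \<noteq> 0 \<Longrightarrow> y \<noteq> 0 \<Longrightarrow> v (x*y) = v x + v y"
  unfolding discrete_valuation_def by blast

lemma dv_add: "discrete_valuation v \<Longrightarrow> x \<noteq> 0 \<Longrightarrow> y \<noteq> 0 \<Longrightarrow> x + y \<noteq> 0 \<Longrightarrow> min (v x) (v y) \<le> v (x+y)"
  unfolding discrete_valuation_def by blast

lemma dv_surj: "discrete_valuation v \<Longrightarrow> \<exists>x. x \<noteq> 0 \<and> v x = z"
  unfolding discrete_valuation_def by blast

lemma dv_one: "discrete_valuation v \<Longrightarrow> v (1::'K::field) = 0"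
  using dv_mult[of v "1::'K" 1] by simp

lemma dv_minus_one: "discrete_valuation v \<Longrightarrow> v (-1::'K::field) = 0"
  using dv_mult[of v "-1::'K" "-1"] dv_one[of v] by simp

lemma dv_uminus: "discrete_valuation v \<Longrightarrow> (x::'K::field) \<noteq> 0 \<Longrightarrow> v (-x) = v x"
  using dv_mult[of v "-1::'K" x] dv_minus_one[of v] by simp

lemma dv_inverse: "discrete_valuation v \<Longrightarrow> (x::'K::field) \<noteq> 0 \<Longrightarrow> v (inverse x) = - v x"
  using dv_mult[of v x "inverse x"] dv_one[of v] by simp

lemma dv_power: "discrete_valuation v \<Longrightarrow> (x::'K::field) \<noteq> 0 \<Longrightarrow> v (x ^ i) = int i * v x"
proof (induct i)
  case 0 thus ?case using dv_one[of v] by simp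
next
  case (Suc i) thus ?case using dv_mult[of v x "x^i"] by (simp add: algebra_simps)
qed

lemma dv_add_lt:
  assumes dv: "discrete_valuation v" and x: "(x::'K::field) \<noteq> 0" and y: "y \<noteq> 0" and lt: "v x < v y"
  shows "x + y \<noteq> 0 \<and> v (x + y) = v x"
proof -
  have nz: "x + y \<noteq> 0"
  proof
    assume "x + y = 0" hence "x = - y" by (simp add: eq_neg_iff_add_eq_0)
    thus False using dv_uminus[OF dv y] lt by simp
  qed
  have ge: "v (x + y) \<ge> v x" using dv_add[OF dv x y nz] lt by simp
  have "v x \<ge> min (v (x+y)) (v (-y))"
    using dv_add[OF dv nz, of "-y"] y x by simp
  hence "v (x+y) \<le> v x" using dv_uminus[OF dv y] lt by simp
  thus ?thesis using ge nz by simp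
qed

lemma modn_distinct:
  fixes n a b i j :: int
  assumes "0 \<le> i" "i < n" "0 \<le> j" "j < n" "n * a + i = n * b + j"
  shows "i = j"
proof -
  have e: "n * (b - a) = i - j" using assms(5) by (simp add: algebra_simps)
  show ?thesis
  proof (cases "b - a = 0")
    case True thus ?thesis using e by simp
  next
    case False
    show ?thesis
    proof (cases "b - a \<ge> 1")
      case True
      hence "n * (b - a) \<ge> n * 1" using assms by (intro mult_left_mono) auto
      thus ?thesis using e assms by simp
    next
      case False2: False
      hence "b - a \<le> -1" using False by simp
      hence "n * (b - a) \<le> n * (-1)" using assms by (intro mult_left_mono) auto
      thus ?thesis using e assms by simp
    qed
  qed
qed

lemma val_sum:
  assumes dv: "discrete_valuation v" and n: "n > 0" and fin: "finite I" and sub: "I \<subseteq> {..<n}"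
    and cv: "\<And>i. i \<in> I \<Longrightarrow> c i \<noteq> 0 \<Longrightarrow> \<exists>m. v (c i) = int n * m"
    and ev: "\<And>i. i \<in> I \<Longrightarrow> (e i::'K::field) \<noteq> 0 \<and> v (e i) = int i"
  shows "(\<forall>i\<in>I. c i = 0) \<or> ((\<Sum>i\<in>I. c i * e i) \<noteq> 0
      \<and> (\<forall>i\<in>I. c i \<noteq> 0 \<longrightarrow> v (\<Sum>i\<in>I. c i * e i) \<le> v (c i) + int i)
      \<and> (\<exists>i\<in>I. c i \<noteq> 0 \<and> v (\<Sum>i\<in>I. c i * e i) = v (c i) + int i))"
  using fin sub cv ev
proof (induct I rule: finite_induct)
  case empty thus ?case by simp
next
  case (insert j F)
  have IH: "(\<forall>i\<in>F. c i = 0) \<or> ((\<Sum>i\<in>F. c i * e i) \<noteq> 0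
      \<and> (\<forall>i\<in>F. c i \<noteq> 0 \<longrightarrow> v (\<Sum>i\<in>F. c i * e i) \<le> v (c i) + int i)
      \<and> (\<exists>i\<in>F. c i \<noteq> 0 \<and> v (\<Sum>i\<in>F. c i * e i) = v (c i) + int i))"
    using insert by auto
  let ?S = "\<Sum>i\<in>F. c i * e i"
  have sumeq: "(\<Sum>i\<in>insert j F. c i * e i) = c j * e j + ?S" using insert by simp
  show ?case
  proof (cases "c j = 0")
    case True
    hence se: "(\<Sum>i\<in>insert j F. c i * e i) = ?S" using sumeq by simp
    show ?thesis unfolding se ball_simps(7) bex_simps(5) using IH True by blast
  next
    case cj: False
    have ej: "e j \<noteq> 0" "v (e j) = int j" using insert by auto
    have tnz: "c j * e j \<noteq> 0" using cj ej by simp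
    have vt: "v (c j * e j) = v (c j) + int j" using dv_mult[OF dv cj ej(1)] ej by simp
    show ?thesis
    proof (cases "\<forall>i\<in>F. c i = 0")
      case True
      hence "?S = 0" by simp
      hence se: "(\<Sum>i\<in>insert j F. c i * e i) = c j * e j" using sumeq by simp
      show ?thesis unfolding se ball_simps(7) bex_simps(5) using tnz vt True cj by simp
    next
      case False
      with IH have S: "?S \<noteq> 0" "\<forall>i\<in>F. c i \<noteq> 0 \<longrightarrow> v ?S \<le> v (c i) + int i"
        "\<exists>i\<in>F. c i \<noteq> 0 \<and> v ?S = v (c i) + int i" by blast+
      then obtain i0 where i0: "i0 \<in> F" "c i0 \<noteq> 0" "v ?S = v (c i0) + int i0" by blast
      have neq: "v (c j * e j) \<noteq> v ?S"
      proof
        assume eq: "v (c j * e j) = v ?S"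
        obtain mj where mj: "v (c j) = int n * mj" using insert(5)[of j] cj by auto
        obtain m0 where m0: "v (c i0) = int n * m0" using insert(5)[of i0] i0 by auto
        have "int n * mj + int j = int n * m0 + int i0" using eq vt i0(3) mj m0 by simp
        moreover have "j < n" "i0 < n" using insert(4) i0(1) by auto
        ultimately have "int j = int i0" using modn_distinct[of "int j" "int n" "int i0" mj m0] by simp
        thus False using i0(1) insert(2) by simp
      qed
      show ?thesis
      proof (cases "v (c j * e j) < v ?S")
        case True
        from dv_add_lt[OF dv tnz S(1) True]
        have r: "c j * e j + ?S \<noteq> 0" "v (c j * e j + ?S) = v (c j) + int j" using vt by auto
        have A: "\<forall>i\<in>F. c i \<noteq> 0 \<longrightarrow> v (c j * e j + ?S) \<le> v (c i) + int i"
        proof (intro ballI impI)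
          fix i assume "i \<in> F" "c i \<noteq> 0"
          hence "v ?S \<le> v (c i) + int i" using S(2) by blast
          thus "v (c j * e j + ?S) \<le> v (c i) + int i" using True r(2) vt by linarith
        qed
        have X: "(\<Sum>i\<in>insert j F. c i * e i) \<noteq> 0" using r(1) sumeq by simp
        have Y: "\<forall>i\<in>insert j F. c i \<noteq> 0 \<longrightarrow> v (\<Sum>i\<in>insert j F. c i * e i) \<le> v (c i) + int i"
        proof (intro ballI impI)
          fix i assume i: "i \<in> insert j F" "c i \<noteq> 0"
          show "v (\<Sum>i\<in>insert j F. c i * e i) \<le> v (c i) + int i"
          proof (cases "i = j")
            case True thus ?thesis using r(2) sumeq by simp
          next
            case False hence "i \<in> F" using i by simp
            thus ?thesis using A i(2) sumeq by simp
          qed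
        qed
        have Z: "\<exists>i\<in>insert j F. c i \<noteq> 0 \<and> v (\<Sum>i\<in>insert j F. c i * e i) = v (c i) + int i"
        proof (rule bexI[of _ j])
          show "c j \<noteq> 0 \<and> v (\<Sum>i\<in>insert j F. c i * e i) = v (c j) + int j" using cj r(2) sumeq by simp
        qed simp
        from X Y Z show ?thesis by (intro disjI2 conjI)
      next
        case False
        hence lt: "v ?S < v (c j * e j)" using neq by simp
        from dv_add_lt[OF dv S(1) tnz lt]
        have r: "c j * e j + ?S \<noteq> 0" "v (c j * e j + ?S) = v ?S" by (auto simp: add.commute)
        have B: "v (c j * e j + ?S) \<le> v (c j) + int j" using r lt vt by simp
        have A: "\<forall>i\<in>F. c i \<noteq> 0 \<longrightarrow> v (c j * e j + ?S) \<le> v (c i) + int i"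
          using S(2) r(2) by simp
        have X: "(\<Sum>i\<in>insert j F. c i * e i) \<noteq> 0" using r(1) sumeq by simp
        have Y: "\<forall>i\<in>insert j F. c i \<noteq> 0 \<longrightarrow> v (\<Sum>i\<in>insert j F. c i * e i) \<le> v (c i) + int i"
        proof (intro ballI impI)
          fix i assume i: "i \<in> insert j F" "c i \<noteq> 0"
          show "v (\<Sum>i\<in>insert j F. c i * e i) \<le> v (c i) + int i"
          proof (cases "i = j")
            case True thus ?thesis using B sumeq by simp
          next
            case False hence "i \<in> F" using i by simp
            thus ?thesis using A i(2) sumeq by simp
          qed
        qed
        have Z: "\<exists>i\<in>insert j F. c i \<noteq> 0 \<and> v (\<Sum>i\<in>insert j F. c i * e i) = v (c i) + int i"
        proof (rule bexI[of _ i0])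
          show "c i0 \<noteq> 0 \<and> v (\<Sum>i\<in>insert j F. c i * e i) = v (c i0) + int i0" using i0(2,3) r(2) sumeq by simp
        qed (use i0(1) in simp)
        from X Y Z show ?thesis by (intro disjI2 conjI)
      qed
    qed
  qed
qed

section \<open>Linear combinations\<close>

lemma lin_comb_zero: "(\<lambda>q. 0) \<in> lin_comb S C"
  unfolding lin_comb_def by (rule CollectI, intro exI[of _ "{}"] exI[of _ "\<lambda>_. 0"]) auto

lemma lin_comb_single: "g \<in> S \<Longrightarrow> c \<in> C \<Longrightarrow> (\<lambda>q. c * g q) \<in> lin_comb S C"
  unfolding lin_comb_def by (rule CollectI, intro exI[of _ "{g}"] exI[of _ "\<lambda>_. c"]) auto

lemma lin_comb_add:
  assumes C0: "0 \<in> C" and Cadd: "\<And>a b. a \<in> C \<Longrightarrow> b \<in> C \<Longrightarrow> a + b \<in> C"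
    and F: "F \<in> lin_comb S C" and H: "H \<in> lin_comb S C"
  shows "(\<lambda>q. F q + H q) \<in> lin_comb S C"
proof -
  obtain G1 c1 where G1: "F = (\<lambda>q. \<Sum>g\<in>G1. c1 g * g q)" "finite G1" "G1 \<subseteq> S" "\<forall>g\<in>G1. c1 g \<in> C"
    using F unfolding lin_comb_def by blast
  obtain G2 c2 where G2: "H = (\<lambda>q. \<Sum>g\<in>G2. c2 g * g q)" "finite G2" "G2 \<subseteq> S" "\<forall>g\<in>G2. c2 g \<in> C"
    using H unfolding lin_comb_def by blast
  define c where "c g = (if g \<in> G1 then c1 g else 0) + (if g \<in> G2 then c2 g else 0)" for g
  have fin: "finite (G1 \<union> G2)" using G1 G2 by simp
  have eq: "(\<lambda>q. F q + H q) = (\<lambda>q. \<Sum>g\<in>G1 \<union> G2. c g * g q)"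
  proof
    fix q
    have "(\<Sum>g\<in>G1 \<union> G2. c g * g q) = (\<Sum>g\<in>G1 \<union> G2. (if g \<in> G1 then c1 g * g q else 0))
          + (\<Sum>g\<in>G1 \<union> G2. (if g \<in> G2 then c2 g * g q else 0))"
      unfolding sum.distrib[symmetric] by (rule sum.cong) (auto simp: c_def distrib_right)
    also have "\<dots> = (\<Sum>g\<in>(G1 \<union> G2) \<inter> G1. c1 g * g q) + (\<Sum>g\<in>(G1 \<union> G2) \<inter> G2. c2 g * g q)"
      by (simp only: sum.inter_restrict[OF fin])
    also have "\<dots> = F q + H q" using G1(1) G2(1) by (simp add: Int_absorb1)
    finally show "F q + H q = (\<Sum>g\<in>G1 \<union> G2. c g * g q)" by simp
  qed
  have "\<forall>g\<in>G1 \<union> G2. c g \<in> C" unfolding c_def using G1(4) G2(4) C0 Cadd by auto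
  thus ?thesis unfolding eq lin_comb_def using fin G1(3) G2(3) by blast
qed

section \<open>Functionals on the free space\<close>

definition fsupp :: "('a \<Rightarrow> 'K::field) \<Rightarrow> 'a set" where
  "fsupp F = {q. F q \<noteq> 0}"

definition phiB :: "('a \<Rightarrow> 'K::field) \<Rightarrow> ('a \<Rightarrow> 'K) \<Rightarrow> 'K" where
  "phiB B F = (\<Sum>q\<in>fsupp F. F q * B q)"

lemma phi_sup:
  assumes "finite S" "fsupp F \<subseteq> S"
  shows "phiB B F = (\<Sum>q\<in>S. F q * B q)"
  unfolding phiB_def
  by (rule sum.mono_neutral_left) (use assms in \<open>auto simp: fsupp_def\<close>)

lemma phi_lin:
  assumes fin: "finite G" and fs: "\<And>g. g \<in> G \<Longrightarrow> finite (fsupp g)"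
  shows "finite (fsupp (\<lambda>q. \<Sum>g\<in>G. c g * g q)) \<and> phiB B (\<lambda>q. \<Sum>g\<in>G. c g * g q) = (\<Sum>g\<in>G. c g * phiB B g)"
proof -
  let ?S = "\<Union>g\<in>G. fsupp g"
  have finS: "finite ?S" using fin fs by (intro finite_UN_I) auto
  have sub: "fsupp (\<lambda>q. \<Sum>g\<in>G. c g * g q) \<subseteq> ?S"
  proof
    fix q assume "q \<in> fsupp (\<lambda>q. \<Sum>g\<in>G. c g * g q)"
    hence nz: "(\<Sum>g\<in>G. c g * g q) \<noteq> 0" unfolding fsupp_def by simp
    show "q \<in> ?S"
    proof (rule ccontr)
      assume "q \<notin> ?S"
      hence "\<forall>g\<in>G. g q = 0" unfolding fsupp_def by auto
      hence "(\<Sum>g\<in>G. c g * g q) = 0" by (auto intro!: sum.neutral)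
      thus False using nz by simp
    qed
  qed
  have "phiB B (\<lambda>q. \<Sum>g\<in>G. c g * g q) = (\<Sum>q\<in>?S. (\<Sum>g\<in>G. c g * g q) * B q)"
    using phi_sup[OF finS sub] by simp
  also have "\<dots> = (\<Sum>q\<in>?S. \<Sum>g\<in>G. c g * (g q * B q))"
    by (simp add: sum_distrib_right mult.assoc)
  also have "\<dots> = (\<Sum>g\<in>G. \<Sum>q\<in>?S. c g * (g q * B q))"
    by (rule sum.swap)
  also have "\<dots> = (\<Sum>g\<in>G. c g * (\<Sum>q\<in>?S. g q * B q))"
    by (simp add: sum_distrib_left)
  also have "\<dots> = (\<Sum>g\<in>G. c g * phiB B g)"
  proof (rule sum.cong[OF refl])
    fix g assume "g \<in> G"
    hence "phiB B g = (\<Sum>q\<in>?S. g q * B q)" using phi_sup[OF finS] by blast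
    thus "c g * (\<Sum>q\<in>?S. g q * B q) = c g * phiB B g" by simp
  qed
  finally show ?thesis using finite_subset[OF sub finS] by simp
qed

lemma phi_add:
  assumes "finite (fsupp F)" "finite (fsupp H)"
  shows "finite (fsupp (\<lambda>q. F q + H q)) \<and> phiB B (\<lambda>q. F q + H q) = phiB B F + phiB B H"
proof -
  let ?S = "fsupp F \<union> fsupp H"
  have finS: "finite ?S" using assms by simp
  have sub: "fsupp (\<lambda>q. F q + H q) \<subseteq> ?S" unfolding fsupp_def by auto
  have "phiB B (\<lambda>q. F q + H q) = (\<Sum>q\<in>?S. (F q + H q) * B q)" using phi_sup[OF finS sub] by simp
  also have "\<dots> = (\<Sum>q\<in>?S. F q * B q) + (\<Sum>q\<in>?S. H q * B q)" by (simp add: distrib_right sum.distrib)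
  also have "\<dots> = phiB B F + phiB B H" using phi_sup[OF finS, of F B] phi_sup[OF finS, of H B] by auto
  finally show ?thesis using finite_subset[OF sub finS] by simp
qed

lemma sum_delta: "finite S \<Longrightarrow> p \<in> S \<Longrightarrow> (\<Sum>q\<in>S. delta p q * f q) = f p"
proof -
  assume "finite S" "p \<in> S"
  have "\<And>q. delta p q * f q = (if q = p then f q else 0)" by (simp add: delta_def)
  hence "(\<Sum>q\<in>S. delta p q * f q) = (\<Sum>q\<in>S. if q = p then f q else 0)" by simp
  thus ?thesis using \<open>finite S\<close> \<open>p \<in> S\<close> by (simp add: sum.delta)
qed

lemma phi_comb3:
  "finite (fsupp (\<lambda>q. a1 * delta p1 q + a2 * delta p2 q + a3 * delta p3 q)) \<and>
   phiB B (\<lambda>q. a1 * delta p1 q + a2 * delta p2 q + a3 * delta p3 q) = a1 * B p1 + a2 * B p2 + a3 * (B p3 :: 'K::field)"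
proof -
  let ?S = "{p1, p2, p3}"
  have sub: "fsupp (\<lambda>q. a1 * delta p1 q + a2 * delta p2 q + a3 * delta p3 q) \<subseteq> ?S"
    unfolding fsupp_def delta_def by auto
  have "phiB B (\<lambda>q. a1 * delta p1 q + a2 * delta p2 q + a3 * delta p3 q)
      = (\<Sum>q\<in>?S. (a1 * delta p1 q + a2 * delta p2 q + a3 * delta p3 q) * B q)"
    using phi_sup[OF _ sub] by simp
  also have "\<dots> = a1 * (\<Sum>q\<in>?S. delta p1 q * B q) + a2 * (\<Sum>q\<in>?S. delta p2 q * B q) + a3 * (\<Sum>q\<in>?S. delta p3 q * B q)"
    by (simp add: distrib_right sum.distrib sum_distrib_left mult.assoc)
  also have "\<dots> = a1 * B p1 + a2 * B p2 + a3 * B p3"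
    by (subst (1 2 3) sum_delta) auto
  finally show ?thesis using finite_subset[OF sub] by simp
qed

lemma phi_delta: "finite (fsupp (delta p)) \<and> phiB B (delta p) = (B p :: 'K::field)"
proof -
  have "delta p = (\<lambda>q. 1 * delta p q + 0 * delta p q + 0 * delta p q)" by auto
  thus ?thesis using phi_comb3[of 1 p 0 p 0 p B] by simp
qed

lemma phi_rel:
  assumes g: "g \<in> bilin_rels k"
    and B1: "\<And>x x' y. B (x + x', y) = B (x, y) + B (x', y)"
    and B2: "\<And>x y y'. B (x, y + y') = B (x, y) + B (x, y')"
    and B3: "\<And>c x y. c \<in> k \<Longrightarrow> B (c * x, y) = c * B (x, y)"
    and B4: "\<And>c x y. c \<in> k \<Longrightarrow> B (x, c * y) = c * (B (x, y) :: 'K::field)"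
  shows "finite (fsupp g) \<and> phiB B g = 0"
  using g unfolding bilin_rels_def
proof (elim UnE CollectE exE conjE)
  fix x x' y assume "g = (\<lambda>q. delta (x + x', y) q - delta (x, y) q - delta (x', y) q)"
  hence "g = (\<lambda>q. 1 * delta (x + x', y) q + (-1) * delta (x, y) q + (-1) * delta (x', y) q)" by auto
  thus ?thesis using phi_comb3[of 1 "(x + x', y)" "-1" "(x, y)" "-1" "(x', y)" B] B1 by simp
next
  fix x y y' assume "g = (\<lambda>q. delta (x, y + y') q - delta (x, y) q - delta (x, y') q)"
  hence "g = (\<lambda>q. 1 * delta (x, y + y') q + (-1) * delta (x, y) q + (-1) * delta (x, y') q)" by auto
  thus ?thesis using phi_comb3[of 1 "(x, y + y')" "-1" "(x, y)" "-1" "(x, y')" B] B2 by simp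
next
  fix c x y assume "g = (\<lambda>q. delta (c * x, y) q - c * delta (x, y) q)" "c \<in> k"
  moreover hence "g = (\<lambda>q. 1 * delta (c * x, y) q + (-c) * delta (x, y) q + 0 * delta (x, y) q)" by auto
  ultimately show ?thesis using phi_comb3[of 1 "(c * x, y)" "-c" "(x, y)" 0 "(x, y)" B] B3 by simp
next
  fix c x y assume "g = (\<lambda>q. delta (x, c * y) q - c * delta (x, y) q)" "c \<in> k"
  moreover hence "g = (\<lambda>q. 1 * delta (x, c * y) q + (-c) * delta (x, y) q + 0 * delta (x, y) q)" by auto
  ultimately show ?thesis using phi_comb3[of 1 "(x, c * y)" "-c" "(x, y)" 0 "(x, y)" B] B4 by simp
qed


section \<open>Ring of integers\<close>

lemma Ok_sub: "ring_of_integers v k \<subseteq> k"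
  unfolding ring_of_integers_def by auto

lemma Ok_zero: "Defs.subfield k \<Longrightarrow> 0 \<in> ring_of_integers v k"
  unfolding ring_of_integers_def Defs.subfield_def by auto

lemma Ok_one: "Defs.subfield k \<Longrightarrow> discrete_valuation v \<Longrightarrow> 1 \<in> ring_of_integers v k"
  unfolding ring_of_integers_def Defs.subfield_def using dv_one[of v] by auto

lemma Ok_add:
  assumes k: "Defs.subfield k" and dv: "discrete_valuation v"
    and a: "a \<in> ring_of_integers v k" and b: "b \<in> ring_of_integers v k"
  shows "a + b \<in> ring_of_integers v k"
proof -
  have ak: "a \<in> k" and bk: "b \<in> k" using a b unfolding ring_of_integers_def by auto
  have abk: "a + b \<in> k" using ak bk k unfolding Defs.subfield_def by auto
  show ?thesis
  proof (cases "a = 0 \<or> b = 0 \<or> a + b = 0")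
    case True thus ?thesis using a b abk unfolding ring_of_integers_def by auto
  next
    case False
    hence "min (v a) (v b) \<le> v (a + b)" using dv_add[OF dv] by blast
    moreover have "v a \<ge> 0" "v b \<ge> 0" using a b False unfolding ring_of_integers_def by auto
    ultimately show ?thesis using abk unfolding ring_of_integers_def by auto
  qed
qed

lemma Ok_mult:
  assumes k: "Defs.subfield k" and dv: "discrete_valuation v"
    and a: "a \<in> ring_of_integers v k" and b: "b \<in> ring_of_integers v k"
  shows "a * b \<in> ring_of_integers v k"
proof -
  have ak: "a \<in> k" and bk: "b \<in> k" using a b unfolding ring_of_integers_def by auto
  have abk: "a * b \<in> k" using ak bk k unfolding Defs.subfield_def by auto
  show ?thesis
  proof (cases "a = 0 \<or> b = 0")
    case True thus ?thesis using abk unfolding ring_of_integers_def by auto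
  next
    case False
    hence "v (a * b) = v a + v b" using dv_mult[OF dv] by blast
    moreover have "v a \<ge> 0" "v b \<ge> 0" using a b False unfolding ring_of_integers_def by auto
    ultimately show ?thesis using abk unfolding ring_of_integers_def by auto
  qed
qed

lemma Ok_sum:
  assumes k: "Defs.subfield k" and dv: "discrete_valuation v"
  shows "finite G \<Longrightarrow> (\<And>g. g \<in> G \<Longrightarrow> h g \<in> ring_of_integers v k) \<Longrightarrow> sum h G \<in> ring_of_integers v k"
proof (induct G rule: finite_induct)
  case empty thus ?case using Ok_zero[OF k] by simp
next
  case (insert g G) thus ?case using Ok_add[OF k dv] by simp
qed

section \<open>Tensor submodules\<close>

lemma ts_intro:
  assumes "f \<in> lin_comb {delta (x, y) | x y. x \<in> A \<and> y \<in> B0} (ring_of_integers v k)"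
    and "r \<in> lin_comb (bilin_rels k) k"
  shows "(\<lambda>q. f q + r q) \<in> tensor_sub v k A B0"
  unfolding tensor_sub_def using assms by (rule_tac CollectI, intro exI[of _ f] exI[of _ r]) simp

lemma ts_add:
  assumes k: "Defs.subfield k" and dv: "discrete_valuation v"
    and F: "F \<in> tensor_sub v k A B0" and H: "H \<in> tensor_sub v k A B0"
  shows "(\<lambda>q. F q + H q) \<in> tensor_sub v k A B0"
proof -
  obtain f r where F': "F = (\<lambda>q. f q + r q)" "f \<in> lin_comb {delta (x, y) | x y. x \<in> A \<and> y \<in> B0} (ring_of_integers v k)"
      "r \<in> lin_comb (bilin_rels k) k" using F unfolding tensor_sub_def by blast
  obtain f' r' where H': "H = (\<lambda>q. f' q + r' q)" "f' \<in> lin_comb {delta (x, y) | x y. x \<in> A \<and> y \<in> B0} (ring_of_integers v k)"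
      "r' \<in> lin_comb (bilin_rels k) k" using H unfolding tensor_sub_def by blast
  have 1: "(\<lambda>q. f q + f' q) \<in> lin_comb {delta (x, y) | x y. x \<in> A \<and> y \<in> B0} (ring_of_integers v k)"
    by (rule lin_comb_add[OF Ok_zero[OF k] Ok_add[OF k dv] F'(2) H'(2)])
  have 2: "(\<lambda>q. r q + r' q) \<in> lin_comb (bilin_rels k) k"
    using k unfolding Defs.subfield_def by (intro lin_comb_add[OF _ _ F'(3) H'(3)]) auto
  have "(\<lambda>q. F q + H q) = (\<lambda>q. (\<lambda>q. f q + f' q) q + (\<lambda>q. r q + r' q) q)" using F'(1) H'(1) by (auto simp: algebra_simps)
  thus ?thesis using ts_intro[OF 1 2] by simp
qed

lemma ts_f:
  assumes "f \<in> lin_comb {delta (x, y) | x y. x \<in> A \<and> y \<in> B0} (ring_of_integers v k)"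
  shows "f \<in> tensor_sub v k A B0"
proof -
  have "(\<lambda>q. f q + (\<lambda>q. 0) q) \<in> tensor_sub v k A B0" by (rule ts_intro[OF assms lin_comb_zero])
  thus ?thesis by simp
qed

lemma ts_r:
  assumes "Defs.subfield k" "r \<in> lin_comb (bilin_rels k) k"
  shows "r \<in> tensor_sub v k A B0"
proof -
  have "(\<lambda>q. (\<lambda>q. 0) q + r q) \<in> tensor_sub v k A B0" by (rule ts_intro[OF lin_comb_zero assms(2)])
  thus ?thesis by simp
qed

lemma ts_mono:
  assumes k: "Defs.subfield k" and dv: "discrete_valuation v"
    and gen: "\<And>x y c. x \<in> A' \<Longrightarrow> y \<in> B' \<Longrightarrow> c \<in> ring_of_integers v k \<Longrightarrow>
                 (\<lambda>q. c * delta (x, y) q) \<in> tensor_sub v k A B0"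
  shows "tensor_sub v k A' B' \<subseteq> tensor_sub v k A B0"
proof
  fix F assume "F \<in> tensor_sub v k A' B'"
  then obtain f r where F: "F = (\<lambda>q. f q + r q)" "f \<in> lin_comb {delta (x, y) | x y. x \<in> A' \<and> y \<in> B'} (ring_of_integers v k)"
      "r \<in> lin_comb (bilin_rels k) k" unfolding tensor_sub_def by blast
  obtain G c where G: "f = (\<lambda>q. \<Sum>g\<in>G. c g * g q)" "finite G" "G \<subseteq> {delta (x, y) | x y. x \<in> A' \<and> y \<in> B'}"
    "\<forall>g\<in>G. c g \<in> ring_of_integers v k" using F(2) unfolding lin_comb_def by blast
  have "\<And>H. finite H \<Longrightarrow> H \<subseteq> G \<Longrightarrow> (\<lambda>q. \<Sum>g\<in>H. c g * g q) \<in> tensor_sub v k A B0"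
  proof -
    fix H :: "('a \<times> 'a \<Rightarrow> 'a) set" assume "finite H" "H \<subseteq> G"
    thus "(\<lambda>q. \<Sum>g\<in>H. c g * g q) \<in> tensor_sub v k A B0"
    proof (induct H rule: finite_induct)
      case empty
      have "(\<lambda>q. \<Sum>g\<in>{}. c g * g q) = (\<lambda>q. 0)" by simp
      thus ?case using ts_f[OF lin_comb_zero] by metis
    next
      case (insert g H)
      have eq: "(\<lambda>q. \<Sum>g\<in>insert g H. c g * g q) = (\<lambda>q. c g * g q + (\<Sum>g\<in>H. c g * g q))"
        using insert(1,2) by simp
      have "g \<in> G" using insert by auto
      then obtain x y where xy: "g = delta (x, y)" "x \<in> A'" "y \<in> B'" using G(3) by blast
      have "(\<lambda>q. c g * g q) \<in> tensor_sub v k A B0" using gen[OF xy(2,3)] G(4) \<open>g \<in> G\<close> xy(1) by blast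
      moreover have "(\<lambda>q. \<Sum>g\<in>H. c g * g q) \<in> tensor_sub v k A B0" using insert by auto
      ultimately show ?case unfolding eq by (rule ts_add[OF k dv])
    qed
  qed
  hence "f \<in> tensor_sub v k A B0" using G by blast
  moreover have "r \<in> tensor_sub v k A B0" using ts_r[OF k F(3)] .
  ultimately show "F \<in> tensor_sub v k A B0" unfolding F(1) by (rule ts_add[OF k dv])
qed

lemma ts_phi:
  assumes k: "Defs.subfield k" and dv: "discrete_valuation v"
    and B1: "\<And>x x' y. B (x + x', y) = B (x, y) + B (x', y)"
    and B2: "\<And>x y y'. B (x, y + y') = B (x, y) + B (x, y')"
    and B3: "\<And>c x y. c \<in> k \<Longrightarrow> B (c * x, y) = c * B (x, y)"
    and B4: "\<And>c x y. c \<in> k \<Longrightarrow> B (x, c * y) = c * B (x, y)"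
    and BAB: "\<And>x y. x \<in> A \<Longrightarrow> y \<in> B0 \<Longrightarrow> B (x, y) \<in> ring_of_integers v k"
    and F: "F \<in> tensor_sub v k A B0"
  shows "phiB B F \<in> ring_of_integers v k"
proof -
  obtain f r where Fd: "F = (\<lambda>q. f q + r q)" "f \<in> lin_comb {delta (x, y) | x y. x \<in> A \<and> y \<in> B0} (ring_of_integers v k)"
      "r \<in> lin_comb (bilin_rels k) k" using F unfolding tensor_sub_def by blast
  obtain G c where G: "f = (\<lambda>q. \<Sum>g\<in>G. c g * g q)" "finite G" "G \<subseteq> {delta (x, y) | x y. x \<in> A \<and> y \<in> B0}"
    "\<forall>g\<in>G. c g \<in> ring_of_integers v k" using Fd(2) unfolding lin_comb_def by blast
  obtain G' c' where G': "r = (\<lambda>q. \<Sum>g\<in>G'. c' g * g q)" "finite G'" "G' \<subseteq> bilin_rels k"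
    using Fd(3) unfolding lin_comb_def by blast
  have gG: "finite (fsupp g) \<and> phiB B g \<in> ring_of_integers v k" if "g \<in> G" for g
  proof -
    obtain x y where "g = delta (x, y)" "x \<in> A" "y \<in> B0" using G(3) \<open>g \<in> G\<close> by blast
    thus ?thesis using phi_delta[of "(x, y)" B] BAB by simp
  qed
  have gG': "finite (fsupp g) \<and> phiB B g = 0" if "g \<in> G'" for g
    using phi_rel[of g k B] B1 B2 B3 B4 G'(3) that by blast
  have f: "finite (fsupp f) \<and> phiB B f = (\<Sum>g\<in>G. c g * phiB B g)"
    unfolding G(1) by (rule phi_lin[OF G(2)]) (use gG in blast)
  have r: "finite (fsupp r) \<and> phiB B r = (\<Sum>g\<in>G'. c' g * phiB B g)"
    unfolding G'(1) by (rule phi_lin[OF G'(2)]) (use gG' in blast)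
  have r0: "phiB B r = 0" using r gG' by simp
  have "phiB B f \<in> ring_of_integers v k"
    using f Ok_sum[OF k dv G(2), of "\<lambda>g. c g * phiB B g"] Ok_mult[OF k dv] G(4) gG by simp
  moreover have "phiB B F = phiB B f + phiB B r" unfolding Fd(1) using phi_add f r by blast
  ultimately show ?thesis using r0 by simp
qed

lemma mpow_shift:
  assumes dv: "discrete_valuation v" and x: "x \<in> mpow v a" and t: "t \<noteq> 0" "v t + a \<ge> a'"
  shows "t * x \<in> mpow v a'"
proof (cases "x = 0")
  case True thus ?thesis unfolding mpow_def by simp
next
  case False
  hence "v (t * x) = v t + v x" using dv_mult[OF dv t(1)] by simp
  moreover have "v x \<ge> a" using x False unfolding mpow_def by simp
  ultimately show ?thesis using t unfolding mpow_def by simp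
qed

lemma gen_shift:
  assumes k: "Defs.subfield k" and dv: "discrete_valuation v"
    and x: "x \<in> mpow v a'" and y: "y \<in> mpow v b'" and c: "c \<in> ring_of_integers v k"
    and t: "t \<in> k" "t \<noteq> 0" "v t = e" and ea: "a \<le> a' + e" and eb: "b \<le> b' - e"
  shows "(\<lambda>q. c * delta (x, y) q) \<in> tensor_sub v k (mpow v a) (mpow v b)"
proof -
  let ?x1 = "t * x" and ?y1 = "inverse t * y"
  have x1: "?x1 \<in> mpow v a" using mpow_shift[OF dv x t(2)] t(3) ea by simp
  have y1: "?y1 \<in> mpow v b" using mpow_shift[OF dv y, of "inverse t"] t dv_inverse[OF dv t(2)] eb by simp
  have ck: "c \<in> k" using c unfolding ring_of_integers_def by simp
  have itk: "inverse t \<in> k" using t k unfolding Defs.subfield_def by simp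
  let ?rel1 = "\<lambda>q. delta (t * x, ?y1) q - t * delta (x, ?y1) q"
  let ?rel2 = "\<lambda>q. delta (x, inverse t * y) q - inverse t * delta (x, y) q"
  have r1: "?rel1 \<in> bilin_rels k" unfolding bilin_rels_def using t(1) by blast
  have r2: "?rel2 \<in> bilin_rels k" unfolding bilin_rels_def using itk by blast
  have m1: "- c \<in> k" "- (c * t) \<in> k" using ck t(1) k unfolding Defs.subfield_def by auto
  have kadd: "\<And>a b. a \<in> k \<Longrightarrow> b \<in> k \<Longrightarrow> a + b \<in> k" "0 \<in> k" using k unfolding Defs.subfield_def by auto
  let ?R = "\<lambda>q. (- c) * ?rel1 q + (- (c * t)) * ?rel2 q"
  have R: "?R \<in> lin_comb (bilin_rels k) k"
    by (rule lin_comb_add[OF kadd(2) kadd(1) lin_comb_single[OF r1 m1(1)] lin_comb_single[OF r2 m1(2)]])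
  let ?f = "\<lambda>q. c * delta (?x1, ?y1) q"
  have f: "?f \<in> lin_comb {delta (x, y) | x y. x \<in> mpow v a \<and> y \<in> mpow v b} (ring_of_integers v k)"
    using x1 y1 c by (intro lin_comb_single) auto
  have eq: "(\<lambda>q. c * delta (x, y) q) = (\<lambda>q. ?f q + ?R q)"
  proof
    fix q
    have "t * inverse t = 1" using t(2) by simp
    hence "c * t * inverse t * delta (x, y) q = c * delta (x, y) q" by (metis mult.assoc mult.right_neutral)
    thus "c * delta (x, y) q = ?f q + ?R q" by (simp add: algebra_simps)
  qed
  show ?thesis unfolding eq by (rule ts_intro[OF f R])
qed

section \<open>Orders\<close>

lemma le2_po: "partial_order_on UNIV le2"
  unfolding partial_order_on_def preorder_on_def refl_on_def trans_def antisym_def le2_def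
  by auto

lemma sim_refl: "(p, p) \<in> sim n"
  unfolding sim_def by (rule CollectI, cases p) (auto intro: exI[of _ 0])

lemma sim_equiv: "equiv UNIV (sim n)"
proof (rule equivI)
  show "sim n \<subseteq> UNIV \<times> UNIV" by simp
  show "refl_on UNIV (sim n)" unfolding refl_on_def sim_def by (auto intro: exI[of _ 0])
  show "sym (sim n)" unfolding sym_def sim_def
  proof (clarsimp)
    fix a b a' b' c assume "a - a' = int n * c" "b' - b = int n * c"
    thus "\<exists>c. a' - a = int n * c \<and> b - b' = int n * c" by (intro exI[of _ "-c"]) simp
  qed
  show "trans (sim n)" unfolding trans_def sim_def
  proof (clarsimp)
    fix a b a' b' a'' b'' c d assume "a - a' = int n * c" "b' - b = int n * c"
       "a' - a'' = int n * d" "b'' - b' = int n * d"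
    thus "\<exists>c. a - a'' = int n * c \<and> b'' - b = int n * c"
      by (intro exI[of _ "c + d"]) (simp add: algebra_simps)
  qed
qed

lemma leX_rep_iff:
  "leX_rep n p q \<longleftrightarrow> (\<exists>d. fst p \<le> fst q + int n * d \<and> snd p \<le> snd q - int n * d)"
proof
  assume "leX_rep n p q"
  then obtain q'' where q: "(q'', q) \<in> sim n" "(p, q'') \<in> le2" unfolding leX_rep_def by blast
  then obtain c where "fst q'' - fst q = int n * c" "snd q - snd q'' = int n * c" unfolding sim_def by auto
  thus "\<exists>d. fst p \<le> fst q + int n * d \<and> snd p \<le> snd q - int n * d"
    using q(2) unfolding le2_def by (intro exI[of _ c]) auto
next
  assume "\<exists>d. fst p \<le> fst q + int n * d \<and> snd p \<le> snd q - int n * d"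
  then obtain d where d: "fst p \<le> fst q + int n * d" "snd p \<le> snd q - int n * d" by blast
  let ?q = "(fst q + int n * d, snd q - int n * d)"
  have "(?q, q) \<in> sim n" unfolding sim_def by auto
  moreover have "(p, ?q) \<in> le2" unfolding le2_def using d by auto
  ultimately show "leX_rep n p q" unfolding leX_rep_def by blast
qed

lemma leX_rep_wd1:
  assumes "(p, p') \<in> sim n" "(q, q') \<in> sim n" "leX_rep n p q"
  shows "leX_rep n p' q'"
proof -
  obtain c where c: "fst p - fst p' = int n * c" "snd p' - snd p = int n * c" using assms(1) unfolding sim_def by auto
  obtain e where e: "fst q - fst q' = int n * e" "snd q' - snd q = int n * e" using assms(2) unfolding sim_def by auto
  obtain d where d: "fst p \<le> fst q + int n * d" "snd p \<le> snd q - int n * d" using assms(3) leX_rep_iff by blast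
  have "fst p' \<le> fst q' + int n * (e + d - c) \<and> snd p' \<le> snd q' - int n * (e + d - c)"
    using c e d by (simp add: algebra_simps)
  thus ?thesis using leX_rep_iff by blast
qed

lemma leX_rep_wd:
  assumes "(p, p') \<in> sim n" "(q, q') \<in> sim n"
  shows "leX_rep n p q = leX_rep n p' q'"
proof -
  have "(p', p) \<in> sim n" "(q', q) \<in> sim n" using assms sim_equiv[of n] unfolding equiv_def sym_def by blast+
  thus ?thesis using leX_rep_wd1 assms by blast
qed

lemma leX_classes: "(sim n `` {p}, sim n `` {q}) \<in> leX n \<longleftrightarrow> leX_rep n p q"
proof
  assume "(sim n `` {p}, sim n `` {q}) \<in> leX n"
  then obtain p' q' where "p' \<in> sim n `` {p}" "q' \<in> sim n `` {q}" "leX_rep n p' q'" unfolding leX_def by blast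
  thus "leX_rep n p q" using leX_rep_wd[of p p' n q q'] by auto
next
  assume "leX_rep n p q"
  moreover have "p \<in> sim n `` {p}" "q \<in> sim n `` {q}" by (simp_all add: sim_refl)
  moreover have "sim n `` {p} \<in> UNIV // sim n" "sim n `` {q} \<in> UNIV // sim n" by (auto intro: quotientI)
  ultimately show "(sim n `` {p}, sim n `` {q}) \<in> leX n" unfolding leX_def by blast
qed

lemma leX_po:
  assumes n: "n > 0"
  shows "partial_order_on (UNIV // sim n) (leX n)"
  unfolding partial_order_on_def preorder_on_def
proof (intro conjI)
  show "leX n \<subseteq> UNIV // sim n \<times> UNIV // sim n" unfolding leX_def by auto
  show "refl_on (UNIV // sim n) (leX n)" unfolding refl_on_def
  proof
    fix X assume "X \<in> UNIV // sim n"
    then obtain p where X: "X = sim n `` {p}" by (auto elim: quotientE)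
    have "leX_rep n p p" using leX_rep_iff[of n p p] by (auto intro: exI[of _ 0])
    thus "(X, X) \<in> leX n" using X leX_classes by blast
  qed
  show "trans (leX n)" unfolding trans_def
  proof (intro allI impI)
    fix X Y Z assume XY: "(X, Y) \<in> leX n" and YZ: "(Y, Z) \<in> leX n"
    then obtain p q q' r where pq: "p \<in> X" "q \<in> Y" "leX_rep n p q" and qr: "q' \<in> Y" "r \<in> Z" "leX_rep n q' r"
      and YU: "Y \<in> UNIV // sim n" and XU: "X \<in> UNIV // sim n" and ZU: "Z \<in> UNIV // sim n"
      unfolding leX_def by blast
    have "(q, q') \<in> sim n" using YU pq(2) qr(1) sim_equiv[of n] by (meson quotient_eq_iff)
    hence "leX_rep n p q'" using leX_rep_wd[of p p n q q'] pq(3) sim_equiv[of n]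
      by (metis UNIV_I equiv_class_eq_iff)
    then obtain d where d: "fst p \<le> fst q' + int n * d" "snd p \<le> snd q' - int n * d" using leX_rep_iff by blast
    obtain d' where d': "fst q' \<le> fst r + int n * d'" "snd q' \<le> snd r - int n * d'" using qr(3) leX_rep_iff by blast
    have "fst p \<le> fst r + int n * (d + d') \<and> snd p \<le> snd r - int n * (d + d')"
      using d d' by (simp add: algebra_simps)
    hence "leX_rep n p r" using leX_rep_iff by blast
    thus "(X, Z) \<in> leX n" unfolding leX_def using XU ZU pq(1) qr(2) by blast
  qed
  show "antisym (leX n)" unfolding antisym_def
  proof (intro allI impI)
    fix X Y assume XY: "(X, Y) \<in> leX n" and YX: "(Y, X) \<in> leX n"
    then have XU: "X \<in> UNIV // sim n" and YU: "Y \<in> UNIV // sim n" unfolding leX_def by auto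
    then obtain p q where X: "X = sim n `` {p}" and Y: "Y = sim n `` {q}" by (auto elim!: quotientE)
    have "leX_rep n p q" "leX_rep n q p" using XY YX X Y leX_classes by blast+
    then obtain c d where c: "fst p \<le> fst q + int n * c" "snd p \<le> snd q - int n * c"
      and d: "fst q \<le> fst p + int n * d" "snd q \<le> snd p - int n * d" using leX_rep_iff by meson
    have "int n * c + int n * d = 0" using c d by linarith
    hence "int n * (c + d) = 0" by (simp add: algebra_simps)
    hence "c + d = 0" using n by simp
    hence dd: "int n * d = - (int n * c)" by (metis add.commute add_eq_0_iff mult_minus_right)
    have "fst p - fst q = int n * c \<and> snd q - snd p = int n * c" using c d dd by linarith
    hence "(p, q) \<in> sim n" unfolding sim_def by blast
    thus "X = Y" using X Y sim_equiv[of n] by (simp add: equiv_class_eq)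
  qed
qed

theorem lemma4p2p3:
  fixes v :: "'K::field \<Rightarrow> int" and k :: "'K set" and n :: nat
  assumes "Defs.subfield k"
    and "discrete_valuation v"
    and "vcomplete_on v (UNIV :: 'K set)"
    and "vcomplete_on v k"
    and "ext_degree k n"
    and "{v x | x. x \<in> k \<and> x \<noteq> 0} = {int n * c | c. True}"
  shows "partial_order_on UNIV le2 \<and> equiv UNIV (sim n)
    \<and> (\<forall>p p' q q'. (p, p') \<in> sim n \<longrightarrow> (q, q') \<in> sim n \<longrightarrow> leX_rep n p q = leX_rep n p' q')
    \<and> partial_order_on (UNIV // sim n) (leX n)
    \<and> (\<forall>a b a' b'. tensor_sub v k (mpow v a') (mpow v b') \<subseteq> tensor_sub v k (mpow v a) (mpow v b)
          \<longleftrightarrow> (sim n `` {(a, b)}, sim n `` {(a', b')}) \<in> leX n)"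
proof -
  note k = assms(1) and dv = assms(2) and deg = assms(5) and vk = assms(6)
  have kclos: "\<And>a b. a \<in> k \<Longrightarrow> b \<in> k \<Longrightarrow> a + b \<in> k \<and> a * b \<in> k \<and> - a \<in> k \<and> a - b \<in> k"
  proof -
    fix a b assume "a \<in> k" "b \<in> k"
    moreover have "a - b = a + - b" by simp
    ultimately show "a + b \<in> k \<and> a * b \<in> k \<and> - a \<in> k \<and> a - b \<in> k"
      using k unfolding Defs.subfield_def by metis
  qed
  have k0: "0 \<in> k" using k unfolding Defs.subfield_def by simp
  have n0: "n > 0"
  proof (rule ccontr)
    assume "\<not> n > 0" hence n: "n = 0" by simp
    obtain bs :: "'K list" where "\<forall>x. \<exists>!cs. length cs = n \<and> set cs \<subseteq> k \<and> x = (\<Sum>i<n. cs ! i * bs ! i)"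
      using deg unfolding ext_degree_def by blast
    hence "\<exists>cs. (1::'K) = (\<Sum>i<n. cs ! i * bs ! i)" by blast
    thus False using n by simp
  qed
  have valk: "\<exists>m. v c = int n * m" if "c \<in> k" "c \<noteq> 0" for c
  proof -
    have "v c \<in> {v x | x. x \<in> k \<and> x \<noteq> 0}" using that by blast
    hence "v c \<in> {int n * c | c. True}" using vk by simp
    thus ?thesis by blast
  qed
  have kel: "\<exists>u. u \<in> k \<and> u \<noteq> 0 \<and> v u = int n * m" for m
  proof -
    have "int n * m \<in> {int n * c | c. True}" by blast
    hence "int n * m \<in> {v x | x. x \<in> k \<and> x \<noteq> 0}" using vk by simp
    hence "\<exists>x. int n * m = v x \<and> x \<in> k \<and> x \<noteq> 0" by (simp only: mem_Collect_eq)
    then obtain x where x: "int n * m = v x" "x \<in> k" "x \<noteq> 0" by blast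
    show ?thesis using x by (intro exI[of _ x]) simp
  qed
  obtain pi :: 'K where pi: "pi \<noteq> 0" "v pi = 1" using dv_surj[OF dv, of 1] by blast
  have ev: "pi ^ i \<noteq> 0 \<and> v (pi ^ i) = int i" for i using dv_power[OF dv pi(1)] pi by simp
  have indep: "\<forall>i<n. c i = 0" if ck: "\<And>i. i < n \<Longrightarrow> c i \<in> k" and s: "(\<Sum>i<n. c i * pi ^ i) = 0" for c
  proof -
    have "(\<forall>i\<in>{..<n}. c i = 0) \<or> ((\<Sum>i\<in>{..<n}. c i * pi ^ i) \<noteq> 0
      \<and> (\<forall>i\<in>{..<n}. c i \<noteq> 0 \<longrightarrow> v (\<Sum>i\<in>{..<n}. c i * pi ^ i) \<le> v (c i) + int i)
      \<and> (\<exists>i\<in>{..<n}. c i \<noteq> 0 \<and> v (\<Sum>i\<in>{..<n}. c i * pi ^ i) = v (c i) + int i))"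
      by (rule val_sum[OF dv n0 finite_lessThan subset_refl]) (use ck valk ev in auto)
    thus ?thesis using s by auto
  qed
  define es where "es = map (\<lambda>i. pi ^ i) [0..<n]"
  have es: "length es = n" "\<And>i. i < n \<Longrightarrow> es ! i = pi ^ i" unfolding es_def by auto
  have escong: "(\<Sum>i<n. cs ! i * es ! i) = (\<Sum>i<n. cs ! i * pi ^ i)" for cs
    by (rule sum.cong) (auto simp: es(2))
  have span: "\<exists>cs. length cs = n \<and> set cs \<subseteq> k \<and> x = (\<Sum>i<n. cs ! i * pi ^ i)" for x
  proof -
    have "\<exists>cs. length cs = n \<and> set cs \<subseteq> k \<and> x = (\<Sum>i<n. cs ! i * es ! i)"
    proof (rule spanning[OF k deg es(1)])
      fix cs :: "'K list" assume cs: "length cs = n" "set cs \<subseteq> k" "(\<Sum>i<n. cs ! i * es ! i) = 0"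
      have "(\<Sum>i<n. cs ! i * pi ^ i) = 0" using cs(3) escong by simp
      moreover have "\<And>i. i < n \<Longrightarrow> cs ! i \<in> k" using cs(1,2) nth_mem by blast
      ultimately have "\<forall>i<n. cs ! i = 0" using indep[of "\<lambda>i. cs ! i"] by blast
      thus "set cs \<subseteq> {0}" using cs(1) by (auto simp: set_conv_nth)
    qed
    thus ?thesis using escong by simp
  qed
  have "\<forall>x. \<exists>cs. length cs = n \<and> set cs \<subseteq> k \<and> x = (\<Sum>i<n. cs ! i * pi ^ i)" using span by blast
  from choice[OF this] obtain C where C: "\<forall>x. length (C x) = n \<and> set (C x) \<subseteq> k \<and> x = (\<Sum>i<n. C x ! i * pi ^ i)"
    by blast
  define mu where "mu i x = C x ! i" for i x
  have Cl: "length (C x) = n" for x using spec[OF C, of x] by (rule conjunct1)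
  have Cs: "set (C x) \<subseteq> k" for x using spec[OF C, of x] by (rule conjunct1[OF conjunct2])
  have Cr: "x = (\<Sum>i<n. C x ! i * pi ^ i)" for x using spec[OF C, of x] by (rule conjunct2[OF conjunct2])
  have muk: "mu i x \<in> k" if "i < n" for i x
  proof -
    have "C x ! i \<in> set (C x)" using that Cl[of x] by (intro nth_mem) simp
    thus ?thesis using Cs[of x] unfolding mu_def by (rule subsetD[rotated])
  qed
  have xrep: "x = (\<Sum>i<n. mu i x * pi ^ i)" for x unfolding mu_def by (rule Cr)
  have uniq: "\<forall>i<n. mu i x = c i" if ck: "\<And>i. i < n \<Longrightarrow> c i \<in> k" and x: "x = (\<Sum>i<n. c i * pi ^ i)" for c x
  proof -
    have "(\<Sum>i<n. (mu i x - c i) * pi ^ i) = (\<Sum>i<n. mu i x * pi ^ i) - (\<Sum>i<n. c i * pi ^ i)"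
      by (simp add: left_diff_distrib sum_subtractf)
    also have "\<dots> = 0" using xrep[of x] x by simp
    finally have "\<forall>i<n. mu i x - c i = 0" using indep[of "\<lambda>i. mu i x - c i"] muk ck kclos by blast
    thus ?thesis by simp
  qed
  have mu_add: "mu i (x + y) = mu i x + mu i y" if "i < n" for i x y
  proof -
    have "x + y = (\<Sum>i<n. mu i x * pi ^ i) + (\<Sum>i<n. mu i y * pi ^ i)"
      by (rule arg_cong2[OF xrep xrep])
    also have "\<dots> = (\<Sum>i<n. (mu i x + mu i y) * pi ^ i)" by (simp add: distrib_right sum.distrib)
    finally have "x + y = (\<Sum>i<n. (mu i x + mu i y) * pi ^ i)" .
    thus ?thesis using uniq[of "\<lambda>i. mu i x + mu i y" "x + y"] muk kclos that by blast
  qed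
  have mu_smult: "mu i (c * x) = c * mu i x" if "i < n" "c \<in> k" for i c x
  proof -
    have "c * x = c * (\<Sum>i<n. mu i x * pi ^ i)" by (rule arg_cong[OF xrep])
    also have "\<dots> = (\<Sum>i<n. (c * mu i x) * pi ^ i)" by (simp add: sum_distrib_left mult.assoc)
    finally have "c * x = (\<Sum>i<n. (c * mu i x) * pi ^ i)" .
    thus ?thesis using uniq[of "\<lambda>i. c * mu i x" "c * x"] muk kclos that by blast
  qed
  have mu_val: "mu i x = 0 \<or> v (mu i x) \<ge> a - int i" if i: "i < n" and x: "x \<in> mpow v a" for i x a
  proof -
    have "(\<forall>i\<in>{..<n}. mu i x = 0) \<or> ((\<Sum>i\<in>{..<n}. mu i x * pi ^ i) \<noteq> 0
      \<and> (\<forall>i\<in>{..<n}. mu i x \<noteq> 0 \<longrightarrow> v (\<Sum>i\<in>{..<n}. mu i x * pi ^ i) \<le> v (mu i x) + int i)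
      \<and> (\<exists>i\<in>{..<n}. mu i x \<noteq> 0 \<and> v (\<Sum>i\<in>{..<n}. mu i x * pi ^ i) = v (mu i x) + int i))"
      by (rule val_sum[OF dv n0 finite_lessThan subset_refl]) (use muk valk ev in auto)
    hence "mu i x = 0 \<or> (x \<noteq> 0 \<and> v x \<le> v (mu i x) + int i)" using xrep[of x] i by auto
    moreover have "x \<noteq> 0 \<Longrightarrow> v x \<ge> a" using x unfolding mpow_def by simp
    ultimately show ?thesis by auto
  qed
  have mu_single: "mu i (u * pi ^ i) = u" if "i < n" "u \<in> k" for i u
  proof -
    have "(\<Sum>l<n. (if l = i then u else 0) * pi ^ l) = (\<Sum>l<n. if l = i then u * pi ^ l else 0)"
      by (rule sum.cong) auto
    also have "\<dots> = u * pi ^ i" using that by (simp add: sum.delta')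
    finally have "u * pi ^ i = (\<Sum>l<n. (if l = i then u else 0) * pi ^ l)" by simp
    hence "\<forall>l<n. mu l (u * pi ^ i) = (if l = i then u else 0)"
      using uniq[of "\<lambda>l. if l = i then u else 0"] that k0 by simp
    thus ?thesis using that by simp
  qed
  have main: "tensor_sub v k (mpow v a') (mpow v b') \<subseteq> tensor_sub v k (mpow v a) (mpow v b)
        \<longleftrightarrow> (\<exists>d. a \<le> a' + int n * d \<and> b \<le> b' - int n * d)" for a b a' b'
  proof
    assume "\<exists>d. a \<le> a' + int n * d \<and> b \<le> b' - int n * d"
    then obtain d where d: "a \<le> a' + int n * d" "b \<le> b' - int n * d" by blast
    obtain t where t: "t \<in> k" "t \<noteq> 0" "v t = int n * d" using kel by blast
    show "tensor_sub v k (mpow v a') (mpow v b') \<subseteq> tensor_sub v k (mpow v a) (mpow v b)"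
      by (rule ts_mono[OF k dv]) (rule gen_shift[OF k dv _ _ _ t d])
  next
    assume incl: "tensor_sub v k (mpow v a') (mpow v b') \<subseteq> tensor_sub v k (mpow v a) (mpow v b)"
    show "\<exists>d. a \<le> a' + int n * d \<and> b \<le> b' - int n * d"
    proof (rule ccontr)
      assume nd: "\<not> (\<exists>d. a \<le> a' + int n * d \<and> b \<le> b' - int n * d)"
      define i where "i = nat (a' mod int n)"
      define s where "s = a' div int n"
      define j where "j = nat (b' mod int n)"
      define tt where "tt = b' div int n"
      have ni: "int i = a' mod int n" "int j = b' mod int n" unfolding i_def j_def using n0 by auto
      have a'eq: "a' = int n * s + int i" unfolding s_def using ni(1) by simp
      have b'eq: "b' = int n * tt + int j" unfolding tt_def using ni(2) by simp
      have ij: "i < n" "j < n" using ni n0 pos_mod_bound[of "int n"] by (metis of_nat_0_less_iff of_nat_less_iff)+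
      define al where "al = - ((int i - a) div int n)"
      define be where "be = - ((int j - b) div int n)"
      have al: "int n * al \<ge> a - int i" "int n * (al - 1) < a - int i"
      proof -
        have e: "(int i - a) div int n * int n + (int i - a) mod int n = int i - a" by (rule div_mult_mod_eq)
        have m: "0 \<le> (int i - a) mod int n" "(int i - a) mod int n < int n" using n0 by simp_all
        have h: "int n * al = - ((int i - a) div int n * int n)" unfolding al_def by (simp add: algebra_simps)
        have h2: "int n * (al - 1) = int n * al - int n" by (simp add: algebra_simps)
        show "int n * al \<ge> a - int i" "int n * (al - 1) < a - int i" using e m h h2 by linarith+
      qed
      have be: "int n * be \<ge> b - int j" "int n * (be - 1) < b - int j"
      proof -
        have e: "(int j - b) div int n * int n + (int j - b) mod int n = int j - b" by (rule div_mult_mod_eq)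
        have m: "0 \<le> (int j - b) mod int n" "(int j - b) mod int n < int n" using n0 by simp_all
        have h: "int n * be = - ((int j - b) div int n * int n)" unfolding be_def by (simp add: algebra_simps)
        have h2: "int n * (be - 1) = int n * be - int n" by (simp add: algebra_simps)
        show "int n * be \<ge> b - int j" "int n * (be - 1) < b - int j" using e m h h2 by linarith+
      qed
      have lt: "s + tt < al + be"
      proof (rule ccontr)
        assume "\<not> s + tt < al + be"
        hence "s + tt - al \<ge> be" by simp
        hence "int n * (s + tt - al) \<ge> int n * be" by (intro mult_left_mono) auto
        hence "a \<le> a' + int n * (al - s) \<and> b \<le> b' - int n * (al - s)"
          using al be a'eq b'eq by (simp add: algebra_simps)
        thus False using nd by blast
      qed
      obtain u1 where u1: "u1 \<in> k" "u1 \<noteq> 0" "v u1 = int n * s" using kel by blast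
      obtain u2 where u2: "u2 \<in> k" "u2 \<noteq> 0" "v u2 = int n * tt" using kel by blast
      obtain w where w: "w \<in> k" "w \<noteq> 0" "v w = int n * (- (al + be))" using kel by blast
      define x' where "x' = u1 * pi ^ i"
      define y' where "y' = u2 * pi ^ j"
      have x'm: "x' \<in> mpow v a'"
        using dv_mult[OF dv u1(2), of "pi ^ i"] ev[of i] u1 a'eq unfolding x'_def mpow_def by simp
      have y'm: "y' \<in> mpow v b'"
        using dv_mult[OF dv u2(2), of "pi ^ j"] ev[of j] u2 b'eq unfolding y'_def mpow_def by simp
      have mux: "mu i x' = u1" unfolding x'_def using mu_single ij u1 by blast
      have muy: "mu j y' = u2" unfolding y'_def using mu_single ij u2 by blast
      define B where "B = (\<lambda>(x, y). w * mu i x * mu j y)"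
      have B1: "B (x + x'', y) = B (x, y) + B (x'', y)" for x x'' y
        unfolding B_def using mu_add ij by (simp add: algebra_simps)
      have B2: "B (x, y + y'') = B (x, y) + B (x, y'')" for x y y''
        unfolding B_def using mu_add ij by (simp add: algebra_simps)
      have B3: "B (c * x, y) = c * B (x, y)" if "c \<in> k" for c x y
        unfolding B_def using mu_smult ij that by (simp add: algebra_simps)
      have B4: "B (x, c * y) = c * B (x, y)" if "c \<in> k" for c x y
        unfolding B_def using mu_smult ij that by (simp add: algebra_simps)
      have bnd: "mu l x = 0 \<or> v (mu l x) \<ge> int n * g"
        if l: "l < n" and x: "x \<in> mpow v e" and g: "int n * (g - 1) < e - int l" for l x e g
      proof (cases "mu l x = 0")
        case False
        then obtain m where m: "v (mu l x) = int n * m" using valk muk l by blast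
        have "v (mu l x) \<ge> e - int l" using mu_val[OF l x] False by simp
        hence "int n * (g - 1) < int n * m" using g m by simp
        hence "g - 1 < m" using n0 by (simp add: mult_less_cancel_left)
        hence "int n * g \<le> int n * m" by (intro mult_left_mono) auto
        thus ?thesis using m by simp
      qed simp
      have BAB: "B (x, y) \<in> ring_of_integers v k" if x: "x \<in> mpow v a" and y: "y \<in> mpow v b" for x y
      proof (cases "mu i x = 0 \<or> mu j y = 0")
        case True thus ?thesis unfolding B_def using Ok_zero[OF k] by auto
      next
        case False
        have vx: "v (mu i x) \<ge> int n * al" using bnd[OF ij(1) x al(2)] False by simp
        have vy: "v (mu j y) \<ge> int n * be" using bnd[OF ij(2) y be(2)] False by simp
        have "v (w * mu i x * mu j y) = v w + v (mu i x) + v (mu j y)"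
          using dv_mult[OF dv, of "w * mu i x" "mu j y"] dv_mult[OF dv w(2), of "mu i x"] False w(2) by simp
        hence "v (w * mu i x * mu j y) \<ge> 0" using vx vy w(3) by (simp add: algebra_simps)
        moreover have "w * mu i x * mu j y \<in> k" using kclos w(1) muk ij by blast
        ultimately show ?thesis unfolding B_def ring_of_integers_def by simp
      qed
      have Bxy: "B (x', y') \<notin> ring_of_integers v k"
      proof -
        have bv: "B (x', y') = w * u1 * u2" unfolding B_def using mux muy by simp
        have nz: "w * u1 * u2 \<noteq> 0" using w u1 u2 by simp
        have "v (w * u1 * u2) = v w + v u1 + v u2"
          using dv_mult[OF dv, of "w * u1" u2] dv_mult[OF dv w(2) u1(2)] w(2) u1(2) u2(2) by simp
        also have "\<dots> = int n * (s + tt - al - be)" using w u1 u2 by (simp add: algebra_simps)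
        finally have vv: "v (w * u1 * u2) = int n * (s + tt - al - be)" .
        have "s + tt - al - be \<le> -1" using lt by simp
        hence "int n * (s + tt - al - be) \<le> int n * (-1)" by (intro mult_left_mono) auto
        hence "v (w * u1 * u2) < 0" using vv n0 by simp
        thus ?thesis using bv nz unfolding ring_of_integers_def by simp
      qed
      have "(\<lambda>q. 1 * delta (x', y') q) \<in> tensor_sub v k (mpow v a') (mpow v b')"
        by (rule ts_f, rule lin_comb_single) (use x'm y'm Ok_one[OF k dv] in auto)
      hence "delta (x', y') \<in> tensor_sub v k (mpow v a) (mpow v b)" using incl by auto
      hence "phiB B (delta (x', y')) \<in> ring_of_integers v k"
        using ts_phi[OF k dv] B1 B2 B3 B4 BAB by blast
      thus False using phi_delta[of "(x', y')" B] Bxy by simp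
    qed
  qed
  have classes: "(sim n `` {(a, b)}, sim n `` {(a', b')}) \<in> leX n
      \<longleftrightarrow> (\<exists>d. a \<le> a' + int n * d \<and> b \<le> b' - int n * d)" for a b a' b'
    using leX_classes[of n "(a, b)" "(a', b')"] leX_rep_iff[of n "(a, b)" "(a', b')"] by simp
  show ?thesis
  proof (intro conjI)
    show "partial_order_on UNIV le2" by (rule le2_po)
    show "equiv UNIV (sim n)" by (rule sim_equiv)
    show "\<forall>p p' q q'. (p, p') \<in> sim n \<longrightarrow> (q, q') \<in> sim n \<longrightarrow> leX_rep n p q = leX_rep n p' q'"
      using leX_rep_wd by blast
    show "partial_order_on (UNIV // sim n) (leX n)" by (rule leX_po[OF n0])
    show "\<forall>a b a' b'. tensor_sub v k (mpow v a') (mpow v b') \<subseteq> tensor_sub v k (mpow v a) (mpow v b)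
          \<longleftrightarrow> (sim n `` {(a, b)}, sim n `` {(a', b')}) \<in> leX n"
      using main classes by simp
  qed
qed

end
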